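(* Let $\psi\in\Psi$ and let $\tau_\omega$ be a Dixmier trace on $M_\psi$. Then for every positive $x\in M_\psi$, $$\tau_\omega(x)\le\omega\Big(t\mapsto\frac{-1}{\psi(t)}\int_{1/t}^\infty\lambda\,dn_x(\lambda)\Big).$$
   Context: $\Psi$ is the class of concave increasing functions $\psi$ on $[0,\infty)$ with $\psi(\infty)=\infty$, $\psi(t)=O(t)$ as $t\to0$, $\psi(t)=o(t)$ as $t\to\infty$. For bounded measurable $x$ on $(0,\infty)$, $n_x(\lambda)=m(\{s:|x(s)|>\lambda\})$, $x^*$ is the nonincreasing right-continuous rearrangement of $|x|$, and $-\int_z^\infty\lambda\,dn_x(\lambda)=\int_0^{n_x(z)}x^*(s)ds$. $M_\psi$ is the space of bounded measurable $x$ with $\sup_{t>0}\frac1{\psi(t)}\int_0^tx^*(s)ds<\infty$. A dilation invariant generalised limit is a positive linear functional $\omega$ on $L_\infty(0,\infty)$ with $\omega(1)=1$, $\omega(y)=0$ whenever $y(t)\to0$, and $\omega(\sigma_ny)=\omega(y)$ for $n\in\mathbb{N}$, $(\sigma_ny)(t)=y(t/n)$. $\tau_\omega(x)=\omega(t\mapsto\frac1{\psi(t)}\int_0^tx^*(s)ds)$ for $0\le x\in M_\psi$ is called a Dixmier trace if it is additive on the positive cone. Values of functions of $t$ on a bounded initial interval do not affect $\omega$. *)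

theory Defs
  imports "HOL-Analysis.Analysis" "HOL-Library.Landau_Symbols"
begin

definition Psi_class :: "(real \<Rightarrow> real) set" where
  "Psi_class = {psi. concave_on {0..} psi \<and> mono_on {0..} psi
      \<and> filterlim psi at_top at_top
      \<and> psi \<in> O[at_right 0](\<lambda>t. t)
      \<and> psi \<in> o[at_top](\<lambda>t. t)}"

text \<open>Functions on (0,infinity): only their values on (0,infinity) matter.\<close>
definition bdd_meas :: "(real \<Rightarrow> real) set" where
  "bdd_meas = {x. x \<in> borel_measurable (restrict_space lborel {0<..})
                 \<and> (\<exists>C. \<forall>s>0. \<bar>x s\<bar> \<le> C)}"

definition distf :: "(real \<Rightarrow> real) \<Rightarrow> real \<Rightarrow> ennreal" where
  "distf x lam = emeasure lborel {s. 0 < s \<and> lam < \<bar>x s\<bar>}"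

definition xstar :: "(real \<Rightarrow> real) \<Rightarrow> real \<Rightarrow> real" where
  "xstar x t = Inf {lam. 0 \<le> lam \<and> distf x lam \<le> ennreal t}"

definition M_psi :: "(real \<Rightarrow> real) \<Rightarrow> (real \<Rightarrow> real) set" where
  "M_psi psi = {x. x \<in> bdd_meas \<and>
      bdd_above ((\<lambda>t. (1 / psi t) * (LBINT s:{0..t}. xstar x s)) ` {0<..})}"

text \<open>L_infinity(0,infinity) (representatives).\<close>
definition Linfty :: "(real \<Rightarrow> real) set" where
  "Linfty = {y. y \<in> borel_measurable (restrict_space lborel {0<..})
                 \<and> (\<exists>C. AE t in lborel. 0 < t \<longrightarrow> \<bar>y t\<bar> \<le> C)}"

definition dilation_invariant_limit :: "((real \<Rightarrow> real) \<Rightarrow> real) \<Rightarrow> bool" where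
  "dilation_invariant_limit omega \<longleftrightarrow>
     (\<forall>y\<in>Linfty. \<forall>z\<in>Linfty. \<forall>a b::real.
         omega (\<lambda>t. a * y t + b * z t) = a * omega y + b * omega z)
   \<and> (\<forall>y\<in>Linfty. (AE t in lborel. 0 < t \<longrightarrow> 0 \<le> y t) \<longrightarrow> 0 \<le> omega y)
   \<and> omega (\<lambda>t. 1) = 1
   \<and> (\<forall>y\<in>Linfty. (y \<longlongrightarrow> 0) at_top \<longrightarrow> omega y = 0)
   \<and> (\<forall>y\<in>Linfty. \<forall>n::nat. 1 \<le> n \<longrightarrow> omega (\<lambda>t. y (t / real n)) = omega y)"

definition tau :: "(real \<Rightarrow> real) \<Rightarrow> ((real \<Rightarrow> real) \<Rightarrow> real) \<Rightarrow> (real \<Rightarrow> real) \<Rightarrow> real" where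
  "tau psi omega x = omega (\<lambda>t. (1 / psi t) * (LBINT s:{0..t}. xstar x s))"

definition dixmier_trace :: "(real \<Rightarrow> real) \<Rightarrow> ((real \<Rightarrow> real) \<Rightarrow> real) \<Rightarrow> bool" where
  "dixmier_trace psi omega \<longleftrightarrow>
     (\<forall>x\<in>M_psi psi. \<forall>y\<in>M_psi psi. (\<forall>s>0. 0 \<le> x s) \<longrightarrow> (\<forall>s>0. 0 \<le> y s) \<longrightarrow>
        tau psi omega (\<lambda>s. x s + y s) = tau psi omega x + tau psi omega y)"

text \<open>The Stieltjes tail  - int_z^infinity lambda dn_x(lambda), given via the identity
  - int_z^infinity lambda dn_x(lambda) = int_0^{n_x(z)} x^*(s) ds.\<close>
definition stieltjes_tail :: "(real \<Rightarrow> real) \<Rightarrow> real \<Rightarrow> real" where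
  "stieltjes_tail x z = (LBINT s:{0..enn2real (distf x z)}. xstar x s)"

end

theory Submission
  imports Defs
begin

lemma distf_set_meas:
  assumes "x \<in> bdd_meas"
  shows "{s. 0 < s \<and> lam < \<bar>x s\<bar>} \<in> sets lborel"
proof -
  have xm: "x \<in> borel_measurable (restrict_space lborel {0<..})"
    using assms by (simp add: bdd_meas_def)
  have "{s \<in> space (restrict_space lborel {0<..}). lam < \<bar>x s\<bar>} \<in> sets (restrict_space lborel {0<..})"
    using xm by measurable
  moreover have "{s \<in> space (restrict_space lborel {0<..}). lam < \<bar>x s\<bar>} = {s. 0 < s \<and> lam < \<bar>x s\<bar>}"
    by (auto simp: space_restrict_space)
  ultimately show ?thesis
    by (subst (asm) sets_restrict_space_iff) auto
qed

lemma distf_antimono: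
  assumes "x \<in> bdd_meas" "a \<le> b"
  shows "distf x b \<le> distf x a"
  unfolding distf_def
  by (rule emeasure_mono) (use assms distf_set_meas in auto)

lemma bdd_meas_bound:
  assumes "x \<in> bdd_meas"
  obtains C where "C \<ge> 0" "\<And>s. s > 0 \<Longrightarrow> \<bar>x s\<bar> \<le> C"
proof -
  obtain C where "\<forall>s>0. \<bar>x s\<bar> \<le> C" using assms by (auto simp: bdd_meas_def)
  then show ?thesis using that[of "max C 0"] by force
qed

lemma xstar_set_ne:
  assumes "x \<in> bdd_meas"
  shows "{lam. 0 \<le> lam \<and> distf x lam \<le> ennreal t} \<noteq> {}"
proof -
  obtain C where C: "C \<ge> 0" "\<And>s. s > 0 \<Longrightarrow> \<bar>x s\<bar> \<le> C" using bdd_meas_bound assms by blast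
  have e: "{s. 0 < s \<and> C < \<bar>x s\<bar>} = {}" using C by force
  have "distf x C = 0" unfolding distf_def by (subst e) simp
  then show ?thesis using C by auto
qed

lemma xstar_nonneg:
  assumes "x \<in> bdd_meas"
  shows "0 \<le> xstar x t"
  unfolding xstar_def by (rule cInf_greatest) (use xstar_set_ne[OF assms] in auto)

lemma xstar_le:
  assumes "0 \<le> lam" "distf x lam \<le> ennreal t"
  shows "xstar x t \<le> lam"
  unfolding xstar_def by (rule cInf_lower) (use assms in \<open>auto intro: bdd_belowI[of _ 0]\<close>)

lemma xstar_bound:
  assumes "x \<in> bdd_meas"
  obtains C where "C \<ge> 0" "\<And>t. xstar x t \<le> C"
proof -
  obtain C where C: "C \<ge> 0" "\<And>s. s > 0 \<Longrightarrow> \<bar>x s\<bar> \<le> C" using bdd_meas_bound assms by blast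
  have e: "{s. 0 < s \<and> C < \<bar>x s\<bar>} = {}" using C by force
  have "distf x C = 0" unfolding distf_def by (subst e) simp
  then show ?thesis using that[of C] C xstar_le[of C x] by auto
qed

lemma xstar_antimono:
  assumes "x \<in> bdd_meas" "a \<le> b"
  shows "xstar x b \<le> xstar x a"
  unfolding xstar_def
  by (rule cInf_superset_mono) (use xstar_set_ne[OF assms(1)] assms(2) in
      \<open>auto intro: bdd_belowI[of _ 0] order.trans ennreal_leI\<close>)

lemma xstar_meas:
  assumes "x \<in> bdd_meas"
  shows "xstar x \<in> borel_measurable lborel"
proof -
  have "mono (\<lambda>t. - xstar x t)" using xstar_antimono[OF assms] by (auto simp: mono_def)
  then have "(\<lambda>t. - xstar x t) \<in> borel_measurable borel" by (rule borel_measurable_mono)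
  then have "(\<lambda>t. - (- xstar x t)) \<in> borel_measurable borel" by measurable
  then show ?thesis by simp
qed

lemma xstar_integrable:
  assumes "x \<in> bdd_meas" "A \<in> sets lborel" "emeasure lborel A < \<infinity>"
  shows "set_integrable lborel A (xstar x)"
proof -
  obtain C where C: "C \<ge> 0" "\<And>t. xstar x t \<le> C" using xstar_bound assms(1) by blast
  show ?thesis unfolding set_integrable_def
    by (rule integrableI_bounded_set_indicator[where B=C])
       (use assms xstar_meas C xstar_nonneg in auto)
qed

lemma xstar_integrable_Icc: "x \<in> bdd_meas \<Longrightarrow> set_integrable lborel {a..b} (xstar x)"
  by (rule xstar_integrable) (auto simp: emeasure_lborel_Icc_eq)

lemma xstar_integrable_Ioc: assumes "x \<in> bdd_meas" shows "set_integrable lborel {a<..b} (xstar x)"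
proof (rule xstar_integrable)
  have "emeasure lborel {a<..b} \<le> emeasure lborel {a..b}" by (rule emeasure_mono) auto
  also have "\<dots> < \<infinity>" by (simp add: emeasure_lborel_Icc_eq)
  finally show "emeasure lborel {a<..b} < \<infinity>" .
qed (auto simp: assms)

lemma xstar_int_nonneg:
  assumes "x \<in> bdd_meas"
  shows "0 \<le> (LBINT s:A. xstar x s)"
  unfolding set_lebesgue_integral_def
  by (rule Bochner_Integration.integral_nonneg) (auto simp: xstar_nonneg[OF assms] indicator_def)

lemma xstar_int_split:
  assumes "x \<in> bdd_meas" "0 \<le> a" "a \<le> b"
  shows "(LBINT s:{0..b}. xstar x s) = (LBINT s:{0..a}. xstar x s) + (LBINT s:{a<..b}. xstar x s)"
proof -
  have "{0..b} = {0..a} \<union> {a<..b}" using assms by auto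
  then show ?thesis
    by (simp only:) (rule set_integral_Un, auto intro!: xstar_integrable_Icc xstar_integrable_Ioc assms(1))
qed

lemma xstar_int_mono:
  assumes "x \<in> bdd_meas" "0 \<le> a" "a \<le> b"
  shows "(LBINT s:{0..a}. xstar x s) \<le> (LBINT s:{0..b}. xstar x s)"
  using xstar_int_split[OF assms] xstar_int_nonneg[OF assms(1), of "{a<..b}"] by simp

lemma xstar_int_upper:
  assumes "x \<in> bdd_meas" "0 \<le> a" "a \<le> b" "\<And>s. a < s \<Longrightarrow> s \<le> b \<Longrightarrow> xstar x s \<le> c"
  shows "(LBINT s:{0..b}. xstar x s) \<le> (LBINT s:{0..a}. xstar x s) + (b - a) * c"
proof -
  have "(LBINT s:{a<..b}. xstar x s) \<le> (LBINT s:{a<..b}. c)"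
    by (rule set_integral_mono[OF xstar_integrable_Ioc[OF assms(1)]]) (use assms in \<open>auto intro!: xstar_integrable_Icc xstar_integrable_Ioc simp: set_integrable_def\<close>)
  also have "\<dots> = (b - a) * c" using assms by (subst set_integral_const) auto
  finally show ?thesis using xstar_int_split[OF assms(1-3)] by simp
qed

lemma xstar_int_lower:
  assumes "x \<in> bdd_meas" "0 \<le> b" "\<And>s. 0 \<le> s \<Longrightarrow> s \<le> b \<Longrightarrow> c \<le> xstar x s"
  shows "b * c \<le> (LBINT s:{0..b}. xstar x s)"
proof -
  have "(LBINT s:{0..b}. c) \<le> (LBINT s:{0..b}. xstar x s)"
    by (rule set_integral_mono[OF _ xstar_integrable_Icc[OF assms(1)]]) (use assms in \<open>auto intro!: xstar_integrable_Icc xstar_integrable_Ioc simp: set_integrable_def\<close>)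
  moreover have "(LBINT s:{0..b}. c) = b * c" using assms by (subst set_integral_const) auto
  ultimately show ?thesis by simp
qed

lemma mono_meas_pos:
  fixes f :: "real \<Rightarrow> real"
  assumes "mono_on {0<..} f"
  shows "f \<in> borel_measurable (restrict_space lborel {0<..})"
  using borel_measurable_mono_on_fnc[OF assms]
    measurable_cong_sets[OF sets_restrict_space_cong[OF sets_lborel] refl, of "{0<..}::real set" "borel::real measure"]
  by simp

lemma Linfty_add: "y \<in> Linfty \<Longrightarrow> z \<in> Linfty \<Longrightarrow> (\<lambda>t. y t + z t) \<in> Linfty"
  unfolding Linfty_def
proof (safe, goal_cases)
  case (1 C D)
  show ?case using 1 by (intro borel_measurable_add borel_measurable_diff)
next
  case (2 C D)
  show ?case
    by (rule exI[of _ "C + D"]) (use 2(2,4) in \<open>eventually_elim, auto\<close>)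
qed

lemma Linfty_diff: "y \<in> Linfty \<Longrightarrow> z \<in> Linfty \<Longrightarrow> (\<lambda>t. y t - z t) \<in> Linfty"
  unfolding Linfty_def
proof (safe, goal_cases)
  case (1 C D)
  show ?case using 1 by (intro borel_measurable_diff)
next
  case (2 C D)
  show ?case
    by (rule exI[of _ "C + D"]) (use 2(2,4) in \<open>eventually_elim, auto\<close>)
qed

lemma LinftyI:
  assumes "y \<in> borel_measurable (restrict_space lborel {0<..})" "\<And>t. 0 < t \<Longrightarrow> \<bar>y t\<bar> \<le> C"
  shows "y \<in> Linfty"
  unfolding Linfty_def using assms by (auto intro!: exI[of _ C])

lemma psi_nonneg:
  assumes "psi \<in> Psi_class" "0 < t"
  shows "0 \<le> psi t"
proof (rule ccontr)
  assume neg: "\<not> 0 \<le> psi t"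
  have mono: "mono_on {0..} psi" and bo: "psi \<in> O[at_right 0](\<lambda>t. t)"
    using assms(1) by (auto simp: Psi_class_def)
  obtain c where c: "c > 0" "eventually (\<lambda>s. norm (psi s) \<le> c * norm s) (at_right 0)"
    using landau_o.bigE[OF bo] by blast
  then obtain b where b: "b > 0" "\<And>y. 0 < y \<Longrightarrow> y < b \<Longrightarrow> norm (psi y) \<le> c * norm y"
    by (auto simp: eventually_at_right_field)
  define s where "s = min (min b t) (- psi t / c) / 2"
  have s: "0 < s" "s < b" "s \<le> t" "c * s < - psi t"
  proof -
    define m where "m = min (min b t) (- psi t / c)"
    have p: "0 < - psi t / c" using neg c by (simp add: field_simps)
    have m: "0 < m" "m \<le> b" "m \<le> t" "m \<le> - psi t / c" using p b assms unfolding m_def by auto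
    have sm: "s = m / 2" unfolding s_def m_def by simp
    show "0 < s" "s < b" "s \<le> t" using m sm by auto
    have "c * m \<le> - psi t" using m(4) c by (simp add: field_simps)
    moreover have "c * s = c * m / 2" using sm by simp
    moreover have "0 < c * m" using m c by simp
    ultimately show "c * s < - psi t" by linarith
  qed
  have "psi s \<le> psi t" using mono s by (auto intro: mono_onD)
  moreover have "norm (psi s) \<le> c * norm s" using b s by auto
  ultimately show False using s by auto
qed

theorem lemma2p6:
  fixes psi :: "real \<Rightarrow> real" and omega :: "(real \<Rightarrow> real) \<Rightarrow> real"
    and x :: "real \<Rightarrow> real"
  assumes "psi \<in> Psi_class"
    and "dilation_invariant_limit omega"
    and "dixmier_trace psi omega"
    and "x \<in> M_psi psi"
    and "\<forall>s>0. 0 \<le> x s"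
  shows "ereal (tau psi omega x)
     \<le> (SUP n::nat. ereal (omega (\<lambda>t. min (stieltjes_tail x (1 / t) / psi t) (real n))))"
proof -
  have xb: "x \<in> bdd_meas" using assms(4) by (simp add: M_psi_def)
  have pmono: "mono_on {0..} psi" and plim: "filterlim psi at_top at_top"
    and psmall: "psi \<in> o[at_top](\<lambda>t. t)"
    using assms(1) by (auto simp: Psi_class_def)
  have pnn: "\<And>t. 0 < t \<Longrightarrow> 0 \<le> psi t" using psi_nonneg[OF assms(1)] by blast
  define F where "F = (\<lambda>a. LBINT s:{0..a}. xstar x s)"
  define h where "h = (\<lambda>t. (1 / psi t) * (LBINT s:{0..t}. xstar x s))"
  have hF: "h t = F t / psi t" for t by (simp add: h_def F_def)
  have Fnn: "0 \<le> F a" for a unfolding F_def by (rule xstar_int_nonneg[OF xb])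
  obtain B where B: "\<And>t. 0 < t \<Longrightarrow> h t \<le> B"
    using assms(4) unfolding M_psi_def bdd_above_def h_def by auto
  have hnn: "0 \<le> h t" if "0 < t" for t using pnn[OF that] Fnn[of t] by (simp add: hF)
  obtain T0 where T0: "\<And>t. T0 \<le> t \<Longrightarrow> 1 \<le> psi t"
    using filterlim_at_top[THEN iffD1, OF plim, rule_format, of 1] by (auto simp: eventually_at_top_linorder)
  define T1 where "T1 = max T0 1"
  have T1: "0 < T1" "\<And>t. T1 \<le> t \<Longrightarrow> 1 \<le> psi t" using T0 by (auto simp: T1_def)
  have fin: "distf x lam \<noteq> \<infinity>" if lam: "0 < lam" for lam
  proof
    assume inf: "distf x lam = \<infinity>"
    have low: "lam \<le> xstar x s" for s
      unfolding xstar_def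
    proof (rule cInf_greatest)
      show "{lam. 0 \<le> lam \<and> distf x lam \<le> ennreal s} \<noteq> {}" by (rule xstar_set_ne[OF xb])
    next
      fix mu assume "mu \<in> {lam. 0 \<le> lam \<and> distf x lam \<le> ennreal s}"
      then have mu: "0 \<le> mu" "distf x mu \<le> ennreal s" by auto
      show "lam \<le> mu"
      proof (rule ccontr)
        assume "\<not> lam \<le> mu"
        then have "distf x lam \<le> distf x mu" by (intro distf_antimono[OF xb]) auto
        with inf mu(2) show False by (simp add: top_unique)
      qed
    qed
    obtain ev where ev: "eventually (\<lambda>t. norm (psi t) \<le> (lam / (2 * (\<bar>B\<bar> + 1))) * norm t) at_top"
      using landau_o.smallD[OF psmall, of "lam / (2 * (\<bar>B\<bar> + 1))"] lam by (auto simp: field_simps)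
    then obtain T2 where T2: "\<And>t. T2 \<le> t \<Longrightarrow> norm (psi t) \<le> (lam / (2 * (\<bar>B\<bar> + 1))) * norm t"
      by (auto simp: eventually_at_top_linorder)
    define t where "t = max T2 T1"
    have t: "0 < t" "T1 \<le> t" "T2 \<le> t" using T1 by (auto simp: t_def)
    have ps: "1 \<le> psi t" using T1 t by auto
    have "t * lam \<le> F t" unfolding F_def by (rule xstar_int_lower[OF xb]) (use t low in auto)
    also have "F t \<le> B * psi t" using B[OF t(1)] ps by (simp add: hF field_simps)
    also have "\<dots> \<le> \<bar>B\<bar> * psi t" using ps by (intro mult_right_mono) auto
    also have "\<dots> \<le> \<bar>B\<bar> * ((lam / (2 * (\<bar>B\<bar> + 1))) * t)"
      using T2[OF t(3)] t ps by (intro mult_left_mono) auto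
    also have "\<dots> < t * lam"
    proof -
      have "\<bar>B\<bar> * ((lam / (2 * (\<bar>B\<bar> + 1))) * t) = (t * lam) * (\<bar>B\<bar> / (2 * (\<bar>B\<bar> + 1)))"
        by (simp add: field_simps)
      moreover have "\<bar>B\<bar> / (2 * (\<bar>B\<bar> + 1)) < 1" by (simp add: field_simps)
      moreover have "0 < t * lam" using t lam by simp
      ultimately show ?thesis by (metis mult.right_neutral mult_strict_left_mono)
    qed
    finally show False by simp
  qed
  define S where "S = (\<lambda>t. stieltjes_tail x (1 / t))"
  have SF: "S t = F (enn2real (distf x (1 / t)))" for t by (simp add: S_def F_def stieltjes_tail_def)
  have Snn: "0 \<le> S t" for t by (simp add: SF Fnn)
  have key: "h t \<le> S t / psi t + 1 / psi t" if t: "T1 \<le> t" for t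
  proof -
    have tp: "0 < t" "1 \<le> psi t" using t T1 by auto
    define N where "N = enn2real (distf x (1 / t))"
    have N: "0 \<le> N" "distf x (1 / t) = ennreal N"
      using fin[of "1 / t"] tp by (auto simp: N_def ennreal_enn2real_if top.not_eq_extremum)
    have small: "xstar x s \<le> 1 / t" if "N \<le> s" for s
      by (rule xstar_le) (use N that tp in auto)
    have "F t \<le> F N + 1"
    proof (cases "t \<le> N")
      case True then show ?thesis unfolding F_def using xstar_int_mono[OF xb, of t N] tp by simp
    next
      case False
      then have "F t \<le> F N + (t - N) * (1 / t)" unfolding F_def
        by (intro xstar_int_upper[OF xb]) (use N small in auto)
      also have "(t - N) * (1 / t) \<le> 1" using tp N by (simp add: field_simps)
      finally show ?thesis by simp
    qed
    then have "F t / psi t \<le> (F N + 1) / psi t" using tp by (intro divide_right_mono) auto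
    then show ?thesis by (simp add: hF SF N_def add_divide_distrib)
  qed
  define n0 :: nat where "n0 = nat \<lceil>B\<rceil>"
  have n0: "B \<le> real n0" unfolding n0_def by linarith
  define G where "G = (\<lambda>t. min (stieltjes_tail x (1 / t) / psi t) (real n0))"
  define P where "P = (\<lambda>t. if T1 \<le> t then 1 / psi t else 0)"
  define E where "E = (\<lambda>t. if t < T1 then real n0 else (0::real))"
  have psim: "psi \<in> borel_measurable (restrict_space lborel {0<..})"
    by (rule mono_meas_pos) (use pmono in \<open>auto simp: mono_on_def\<close>)
  have Fm: "F \<in> borel_measurable (restrict_space lborel {0<..})"
    by (rule mono_meas_pos) (auto simp: mono_on_def F_def intro!: xstar_int_mono[OF xb])
  have Sm: "S \<in> borel_measurable (restrict_space lborel {0<..})"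
  proof (rule mono_meas_pos, rule mono_onI)
    fix a b :: real assume ab: "a \<in> {0<..}" "b \<in> {0<..}" "a \<le> b"
    have "distf x (1 / a) \<le> distf x (1 / b)"
      by (rule distf_antimono[OF xb]) (use ab in \<open>auto simp: field_simps\<close>)
    then have "enn2real (distf x (1 / a)) \<le> enn2real (distf x (1 / b))"
      by (rule enn2real_mono) (use fin[of "1 / b"] ab in \<open>auto simp: top.not_eq_extremum\<close>)
    then show "S a \<le> S b" unfolding SF F_def by (intro xstar_int_mono[OF xb]) auto
  qed
  have hm: "h \<in> borel_measurable (restrict_space lborel {0<..})"
    unfolding h_def using psim Fm unfolding F_def by measurable
  have Gm: "G \<in> borel_measurable (restrict_space lborel {0<..})"
    unfolding G_def using psim Sm unfolding S_def by measurable
  have idb: "(\<lambda>x::real. x) \<in> borel_measurable (restrict_space borel {0<..})"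
    by (rule measurable_restrict_space1) simp
  have idl: "(\<lambda>x::real. x) \<in> borel_measurable (restrict_space lborel {0<..})"
    by (rule measurable_restrict_space1) simp
  have Pm: "P \<in> borel_measurable (restrict_space lborel {0<..})"
    unfolding P_def using psim idb idl by measurable
  have Em: "E \<in> borel_measurable (restrict_space lborel {0<..})"
    unfolding E_def using idb idl by measurable
  have GS: "G t = min (S t / psi t) (real n0)" for t by (simp add: G_def S_def)
  have hL: "h \<in> Linfty" by (rule LinftyI[OF hm, of B]) (use hnn B in force)
  have GL: "G \<in> Linfty"
  proof (rule LinftyI[OF Gm, of "real n0"])
    fix t :: real assume "0 < t"
    then have "0 \<le> S t / psi t" using Snn pnn by simp
    then show "\<bar>G t\<bar> \<le> real n0" by (simp add: GS)
  qed
  have PL: "P \<in> Linfty"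
  proof (rule LinftyI[OF Pm, of 1])
    fix t :: real assume "0 < t"
    show "\<bar>P t\<bar> \<le> 1"
    proof (cases "T1 \<le> t")
      case True
      then have "1 \<le> psi t" by (rule T1(2))
      then show ?thesis using True by (simp add: P_def)
    qed (simp add: P_def)
  qed
  have EL: "E \<in> Linfty" by (rule LinftyI[OF Em, of "real n0"]) (simp add: E_def)
  have lin: "\<forall>y\<in>Linfty. \<forall>z\<in>Linfty. \<forall>a b::real.
         omega (\<lambda>t. a * y t + b * z t) = a * omega y + b * omega z"
    and pos: "\<forall>y\<in>Linfty. (AE t in lborel. 0 < t \<longrightarrow> 0 \<le> y t) \<longrightarrow> 0 \<le> omega y"
    and lim0: "\<forall>y\<in>Linfty. (y \<longlongrightarrow> 0) at_top \<longrightarrow> omega y = 0"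
    using assms(2) unfolding dilation_invariant_limit_def by blast+
  have addo: "omega (\<lambda>t. y t + z t) = omega y + omega z" if "y \<in> Linfty" "z \<in> Linfty" for y z
    using lin[rule_format, OF that, of 1 1] by simp
  have diffo: "omega (\<lambda>t. y t - z t) = omega y - omega z" if "y \<in> Linfty" "z \<in> Linfty" for y z
    using lin[rule_format, OF that, of 1 "-1"] by simp
  have "((\<lambda>t. inverse (psi t)) \<longlongrightarrow> 0) at_top" by (rule tendsto_inverse_0_at_top[OF plim])
  moreover have "eventually (\<lambda>t. inverse (psi t) = P t) at_top"
    using eventually_ge_at_top[of T1] by eventually_elim (simp add: P_def field_simps)
  ultimately have "(P \<longlongrightarrow> 0) at_top" by (rule Lim_transform_eventually)
  then have oP: "omega P = 0" using lim0 PL by blast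
  have "eventually (\<lambda>t. E t = 0) at_top"
    using eventually_ge_at_top[of T1] by eventually_elim (simp add: E_def)
  then have "(E \<longlongrightarrow> 0) at_top" by (rule tendsto_eventually)
  then have oE: "omega E = 0" using lim0 EL by blast
  define Q where "Q = (\<lambda>t. P t + E t)"
  define R where "R = (\<lambda>t. G t + Q t)"
  have QL: "Q \<in> Linfty" unfolding Q_def by (rule Linfty_add[OF PL EL])
  have RL: "R \<in> Linfty" unfolding R_def by (rule Linfty_add[OF GL QL])
  have KL: "(\<lambda>t. R t - h t) \<in> Linfty" by (rule Linfty_diff[OF RL hL])
  have pw: "0 \<le> R t - h t" if t: "0 < t" for t
  proof (cases "T1 \<le> t")
    case True
    have "h t \<le> S t / psi t + 1 / psi t" by (rule key[OF True])
    moreover have "h t \<le> real n0" using B[OF t] n0 by simp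
    moreover have "0 \<le> 1 / psi t" using pnn[OF t] by simp
    ultimately have "h t \<le> G t + 1 / psi t" unfolding GS by linarith
    then show ?thesis using True by (simp add: R_def Q_def P_def E_def)
  next
    case False
    have "0 \<le> S t / psi t" using Snn pnn[OF t] by simp
    then have "0 \<le> G t" by (simp add: GS)
    moreover have "h t \<le> real n0" using B[OF t] n0 by simp
    ultimately show ?thesis using False by (simp add: R_def Q_def P_def E_def)
  qed
  have "0 \<le> omega (\<lambda>t. R t - h t)"
    using pos KL pw by auto
  also have "omega (\<lambda>t. R t - h t) = omega G - omega h"
    using diffo[OF RL hL] addo[OF GL QL] addo[OF PL EL] oP oE
    by (simp add: R_def Q_def)
  finally have le: "omega h \<le> omega G" by simp
  have "tau psi omega x = omega h" by (simp add: tau_def h_def)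
  then have "ereal (tau psi omega x) \<le> ereal (omega G)" using le by simp
  also have "\<dots> \<le> (SUP n::nat. ereal (omega (\<lambda>t. min (stieltjes_tail x (1 / t) / psi t) (real n))))"
    unfolding G_def by (rule SUP_upper) simp
  finally show ?thesis .
qed
end
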